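(* Let $V$ be a finite-dimensional braided vector space of diagonal type over a field $F$ of characteristic zero and $\mathfrak B(V)$ its Nichols algebra. If $\Delta(\mathfrak B(V))$ is not an arithmetic root system (i.e. is infinite), then $\dim\mathfrak L(V)_L=\infty$ and $\dim\mathfrak L(V)_R=\infty$.
   Context: $V$ has basis $x_1<\dots<x_n$, braiding $C(x_i\otimes x_j)=p_{i,j}x_j\otimes x_i$; $\mathfrak B(V)=T(V)/\bigoplus_{m\ge2}\ker S_m$ is $\mathbb Z^n$-graded by $\deg x_i=e_i$. Words are ordered lexicographically; a word $u$ is Lyndon if $|u|=1$ or $u<u_2u_1$ for every factorization $u=u_1u_2$ into nonempty words. A word is standard with respect to $\mathfrak B(V)$ if in $\mathfrak B(V)$ it is not a linear combination of strictly greater words (of the same degree). $\Delta^+(\mathfrak B(V))$ is the set of degrees of words that are both Lyndon and standard (equivalently, degrees of Kharchenko's hard super-letters), $\Delta(\mathfrak B(V))=\Delta^+\cup(-\Delta^+)$; it is an arithmetic root system if it is finite. With $p_{u,v}=\prod p_{i,j}^{a_ib_j}$ for $\deg u=\sum a_ie_i,\deg v=\sum b_je_j$, $\mathfrak L(V)_L$ (resp. $\mathfrak L(V)_R$) is the Lie subalgebra of $\mathfrak B(V)$ generated by $V$ under $[u,v]_L=p_{v,u}uv-p_{u,v}vu$ (resp. $[u,v]_R=p_{u,v}uv-p_{v,u}vu$). *)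

theory Defs
  imports "HOL-Combinatorics.Permutations"
begin

text \<open>Letters x_1 < ... < x_n are encoded as natural numbers 0 < ... < n-1.
  Words are lists of letters. Elements of the tensor algebra T(V) are
  finitely supported coefficient functions on words over the alphabet.\<close>

type_synonym 'a tens = "nat list \<Rightarrow> 'a"

definition tensor_elem :: "nat \<Rightarrow> 'a::zero tens \<Rightarrow> bool" where
  "tensor_elem n f \<longleftrightarrow> finite {w. f w \<noteq> 0} \<and> (\<forall>w. f w \<noteq> 0 \<longrightarrow> set w \<subseteq> {..<n})"

definition word :: "nat list \<Rightarrow> 'a::{zero,one} tens" where
  "word u = (\<lambda>w. if w = u then 1 else 0)"

text \<open>Quantum symmetrizer S_m (all m at once; it preserves length). For a word
  w = x_{i_0}...x_{i_{m-1}} and a permutation s of {0..<m}, the braid lift of s sends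
  w to the word w' with w' ! (s a) = w ! a, multiplied by the product of p (w!a) (w!b)
  over all pairs a < b with s b < s a. Below, (symm p f) w' collects all contributions
  landing on w'.\<close>

definition symm :: "(nat \<Rightarrow> nat \<Rightarrow> 'a::field) \<Rightarrow> 'a tens \<Rightarrow> 'a tens" where
  "symm p f w' = (\<Sum>s\<in>{s. s permutes {0..<length w'}}.
      f (map (\<lambda>a. w' ! s a) [0..<length w'])
      * (\<Prod>(a,b)\<in>{(a,b). a < b \<and> b < length w' \<and> s b < s a}. p (w' ! s a) (w' ! s b)))"

definition nichols_ideal :: "nat \<Rightarrow> (nat \<Rightarrow> nat \<Rightarrow> 'a::field) \<Rightarrow> 'a tens set" where
  "nichols_ideal n p = {f. tensor_elem n f \<and> (\<forall>w. length w \<le> 1 \<longrightarrow> f w = 0)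
                             \<and> (\<forall>w. symm p f w = 0)}"

definition word_less :: "nat list \<Rightarrow> nat list \<Rightarrow> bool" where
  "word_less u v \<longleftrightarrow> (u, v) \<in> lexord {(a, b). a < b}"

definition lyndon :: "nat list \<Rightarrow> bool" where
  "lyndon u \<longleftrightarrow> u \<noteq> [] \<and> (length u = 1 \<or>
     (\<forall>u1 u2. u = u1 @ u2 \<and> u1 \<noteq> [] \<and> u2 \<noteq> [] \<longrightarrow> word_less u (u2 @ u1)))"

definition standard :: "nat \<Rightarrow> (nat \<Rightarrow> nat \<Rightarrow> 'a::field) \<Rightarrow> nat list \<Rightarrow> bool" where
  "standard n p u \<longleftrightarrow> \<not> (\<exists>c :: nat list \<Rightarrow> 'a.
      (\<lambda>w. word u w - (if mset w = mset u \<and> word_less u w then c w else 0))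
        \<in> nichols_ideal n p)"

definition deg :: "nat list \<Rightarrow> nat \<Rightarrow> int" where
  "deg u = (\<lambda>i. int (count (mset u) i))"

definition Delta_plus :: "nat \<Rightarrow> (nat \<Rightarrow> nat \<Rightarrow> 'a::field) \<Rightarrow> (nat \<Rightarrow> int) set" where
  "Delta_plus n p = deg ` {u. set u \<subseteq> {..<n} \<and> lyndon u \<and> standard n p u}"

definition Delta :: "nat \<Rightarrow> (nat \<Rightarrow> nat \<Rightarrow> 'a::field) \<Rightarrow> (nat \<Rightarrow> int) set" where
  "Delta n p = Delta_plus n p \<union> (\<lambda>d i. - d i) ` Delta_plus n p"

definition pw :: "(nat \<Rightarrow> nat \<Rightarrow> 'a::comm_monoid_mult) \<Rightarrow> nat list \<Rightarrow> nat list \<Rightarrow> 'a" where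
  "pw p u v = prod_list [p a b. a \<leftarrow> u, b \<leftarrow> v]"

text \<open>Bilinear extensions of [u,v]_L = p_{v,u} uv - p_{u,v} vu and
  [u,v]_R = p_{u,v} uv - p_{v,u} vu from words to T(V).\<close>

definition bracketL :: "(nat \<Rightarrow> nat \<Rightarrow> 'a::field) \<Rightarrow> 'a tens \<Rightarrow> 'a tens \<Rightarrow> 'a tens" where
  "bracketL p f g w = (\<Sum>k\<le>length w. pw p (drop k w) (take k w) *
       (f (take k w) * g (drop k w) - g (take k w) * f (drop k w)))"

definition bracketR :: "(nat \<Rightarrow> nat \<Rightarrow> 'a::field) \<Rightarrow> 'a tens \<Rightarrow> 'a tens \<Rightarrow> 'a tens" where
  "bracketR p f g w = (\<Sum>k\<le>length w. pw p (take k w) (drop k w) *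
       (f (take k w) * g (drop k w) - g (take k w) * f (drop k w)))"

text \<open>Preimage in T(V) of the Lie subalgebra generated by V: smallest subspace
  containing x_1,...,x_n and closed under the bracket.\<close>

inductive_set lie_closure :: "('a::field tens \<Rightarrow> 'a tens \<Rightarrow> 'a tens) \<Rightarrow> nat \<Rightarrow> 'a tens set"
  for br n where
  gen: "i < n \<Longrightarrow> word [i] \<in> lie_closure br n"
| add: "f \<in> lie_closure br n \<Longrightarrow> g \<in> lie_closure br n \<Longrightarrow> (\<lambda>w. f w + g w) \<in> lie_closure br n"
| smult: "f \<in> lie_closure br n \<Longrightarrow> (\<lambda>w. c * f w) \<in> lie_closure br n"
| br: "f \<in> lie_closure br n \<Longrightarrow> g \<in> lie_closure br n \<Longrightarrow> br f g \<in> lie_closure br n"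

definition LieL :: "nat \<Rightarrow> (nat \<Rightarrow> nat \<Rightarrow> 'a::field) \<Rightarrow> 'a tens set" where
  "LieL n p = lie_closure (bracketL p) n"

definition LieR :: "nat \<Rightarrow> (nat \<Rightarrow> nat \<Rightarrow> 'a::field) \<Rightarrow> 'a tens set" where
  "LieR n p = lie_closure (bracketR p) n"

text \<open>The image of S \<subseteq> T(V) in B(V) = T(V)/I is finite-dimensional: it is
  spanned modulo I by finitely many elements of T(V).\<close>

definition fin_dim_mod :: "nat \<Rightarrow> (nat \<Rightarrow> nat \<Rightarrow> 'a::field) \<Rightarrow> 'a tens set \<Rightarrow> bool" where
  "fin_dim_mod n p S \<longleftrightarrow> (\<exists>gs :: 'a tens list. (\<forall>g\<in>set gs. tensor_elem n g) \<and>
      (\<forall>f\<in>S. \<exists>c :: nat \<Rightarrow> 'a.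
          (\<lambda>w. f w - (\<Sum>j<length gs. c j * (gs ! j) w)) \<in> nichols_ideal n p))"

end

theory Submission
  imports Defs "HOL-Library.List_Lexorder"
begin


lemma wl_iff: "word_less u v \<longleftrightarrow> u < (v::nat list)"
  by (simp add: word_less_def list_less_def)

lemma W3: "(x @ y < x @ z) \<longleftrightarrow> (y < (z::nat list))"
  by (induction x) auto

lemma W4: "length a = length b \<Longrightarrow> a < b \<Longrightarrow> a @ c < b @ (d::nat list)"
proof (induction a arbitrary: b)
  case Nil then show ?case by simp
next
  case (Cons x xs) then show ?case by (cases b) auto
qed

lemma W6: "length a = length b \<Longrightarrow> a @ c < b @ (d::nat list) \<Longrightarrow> a \<le> b"
  by (metis W4 less_asym not_le)

lemma W7: "y \<noteq> [] \<Longrightarrow> x < x @ (y::nat list)"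
  by (induction x) (auto simp: neq_Nil_conv)

lemma W9: "u < s \<Longrightarrow> length s \<le> length u \<Longrightarrow> u < s @ (r::nat list)"
proof (induction u arbitrary: s)
  case Nil then show ?case by simp
next
  case (Cons x xs) then show ?case by (cases s) auto
qed

definition Lsuf :: "nat list \<Rightarrow> bool" where
  "Lsuf u \<longleftrightarrow> u \<noteq> [] \<and> (\<forall>r s. u = r @ s \<and> r \<noteq> [] \<and> s \<noteq> [] \<longrightarrow> u < s)"

lemma A: "Lsuf u \<Longrightarrow> lyndon u"
  unfolding Lsuf_def lyndon_def wl_iff
  by (metis W9 le_add2 length_append)

lemma border_short:
  "u = s @ t \<Longrightarrow> u = r @ s \<Longrightarrow> s \<noteq> [] \<Longrightarrow> r \<noteq> [] \<Longrightarrow>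
   \<exists>s' m. s' \<noteq> [] \<and> u = s' @ m @ s'"
proof (induction "length s" arbitrary: s t r rule: less_induct)
  case less
  show ?case
  proof (cases "length s \<le> length r")
    case True
    have "take (length s) (r @ s) = take (length s) (s @ t)" using less.prems by simp
    then have "take (length s) r = s" using True by simp
    then have "r = s @ drop (length s) r" by (metis append_take_drop_id)
    then show ?thesis using less.prems by (metis append.assoc)
  next
    case False
    define b where "b = take (length s - length r) s"
    have "take (length s) (r @ s) = take (length s) (s @ t)" using less.prems by simp
    then have s1: "s = r @ b" using False unfolding b_def by simp
    have lb: "length b = length s - length r" unfolding b_def by simp
    have "s = b @ drop (length b) s" unfolding lb unfolding b_def by simp
    then have "u = b @ (drop (length b) s @ t)" using less.prems(1) by (metis append.assoc)
    moreover have "u = (r @ r) @ b" using less.prems s1 by simp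
    moreover have "b \<noteq> []" using False b_def less.prems(3) by simp
    moreover have "length b < length s" using less.prems b_def by (simp add: False)
    moreover have "r @ r \<noteq> []" using less.prems by simp
    ultimately show ?thesis using less.hyps[of b "drop (length b) s @ t" "r @ r"] by blast
  qed
qed

lemma no_border: "lyndon u \<Longrightarrow> s \<noteq> [] \<Longrightarrow> u \<noteq> s @ m @ s"
proof
  assume l: "lyndon u" and s: "s \<noteq> []" and u: "u = s @ m @ s"
  have ne: "length u \<noteq> 1" using u s by (cases s) auto
  have r1: "u < (m @ s) @ s" using l ne u s unfolding lyndon_def wl_iff
    by (metis append_is_Nil_conv)
  have r2: "u < s @ (s @ m)" using l ne u s unfolding lyndon_def wl_iff
    by (metis append.assoc append_is_Nil_conv)
  have "m @ s < s @ m" using r2 u W3 by (metis append.assoc)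
  then have "(m @ s) @ s < (s @ m) @ s" using W4[of "m @ s" "s @ m" s s] by simp
  then show False using r1 u by simp
qed

lemma B: "lyndon u \<Longrightarrow> Lsuf u"
  unfolding Lsuf_def
proof (intro conjI allI impI)
  assume l: "lyndon u"
  then show "u \<noteq> []" by (simp add: lyndon_def)
  fix r s assume h: "u = r @ s \<and> r \<noteq> [] \<and> s \<noteq> []"
  have ne: "length u \<noteq> 1" using h by (cases r; cases s) auto
  have lt: "u < s @ r" using l ne h unfolding lyndon_def wl_iff by auto
  show "u < s"
  proof (cases "take (length s) u = s")
    case True
    then have "u = s @ drop (length s) u" by (metis append_take_drop_id)
    then obtain s' m where "s' \<noteq> []" "u = s' @ m @ s'"
      using border_short[of u s "drop (length s) u" r] h by blast
    then show ?thesis using no_border l by blast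
  next
    case False
    define a where "a = take (length s) u"
    have la: "length a = length s" unfolding a_def using h by simp
    have "a @ drop (length s) u < s @ r" using lt a_def by simp
    then have "a \<le> s" using W6 la by blast
    then have "a < s" using False a_def by simp
    then have "a @ drop (length s) u < s @ []" using W4 la by blast
    then show ?thesis using a_def by simp
  qed
qed

lemma C: assumes l: "lyndon u" and len: "length u \<ge> 2"
  shows "\<exists>w v. u = w @ v \<and> lyndon w \<and> lyndon v"
proof -
  have Lu: "Lsuf u" using B l by blast
  define S where "S = (\<lambda>k. drop k u) ` {1..<length u}"
  have fS: "finite S" unfolding S_def by simp
  have neS: "S \<noteq> {}" unfolding S_def using len by auto
  have inS: "drop j u \<in> S" if "0 < j" "j < length u" for j
    unfolding S_def using that by auto
  define v where "v = Min S"
  have "v \<in> S" unfolding v_def using fS neS by simp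
  then obtain k where k: "1 \<le> k" "k < length u" "v = drop k u" unfolding S_def by auto
  define w where "w = take k u"
  have u: "u = w @ v" unfolding w_def k by simp
  have lw: "length w = k" unfolding w_def using k by simp
  have minv: "v \<le> x" if "x \<in> S" for x unfolding v_def using fS that by simp
  have Lv: "Lsuf v"
    unfolding Lsuf_def
  proof (intro conjI allI impI)
    show "v \<noteq> []" using k by simp
    fix r s assume h: "v = r @ s \<and> r \<noteq> [] \<and> s \<noteq> []"
    have "u = (w @ r) @ s" using u h by simp
    then have "s = drop (length (w @ r)) u" by (metis append_eq_conv_conj)
    moreover have "0 < length (w @ r)" "length (w @ r) < length u"
      using h lw k \<open>u = (w @ r) @ s\<close> by auto
    ultimately have "v \<le> s" using inS minv by metis
    moreover have "v \<noteq> s" using h by auto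
    ultimately show "v < s" by simp
  qed
  have Lw: "Lsuf w"
    unfolding Lsuf_def
  proof (intro conjI allI impI)
    show "w \<noteq> []" using lw k by auto
    fix r s assume h: "w = r @ s \<and> r \<noteq> [] \<and> s \<noteq> []"
    have ur: "u = r @ (s @ v)" using u h by simp
    then have "u < s @ v" using Lu h unfolding Lsuf_def by blast
    show "w < s"
    proof (cases "take (length s) w = s")
      case True
      define t where "t = drop (length s) w"
      have wst: "w = s @ t" unfolding t_def using True by (metis append_take_drop_id)
      have "u = s @ (t @ v)" using u wst by simp
      then have "t @ v < v" using \<open>u < s @ v\<close> W3 by metis
      moreover have "t @ v = drop (length s) u" using \<open>u = s @ (t @ v)\<close> by simp
      moreover have "0 < length s" "length s < length u" using h ur by auto
      ultimately show ?thesis using inS minv by (metis leD)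
    next
      case False
      define a where "a = take (length s) w"
      have la: "length a = length s" unfolding a_def using h by simp
      have "u = a @ (drop (length s) w @ v)" unfolding a_def using u by simp
      then have "a @ (drop (length s) w @ v) < s @ v" using \<open>u < s @ v\<close> by simp
      then have "a \<le> s" using W6 la by blast
      then have "a < s" using False a_def by simp
      then have "a @ drop (length s) w < s @ []" using W4 la by blast
      then show ?thesis using a_def by simp
    qed
  qed
  show ?thesis using u A Lv Lw by blast
qed



definition brq :: "(nat list \<Rightarrow> nat list \<Rightarrow> 'a::field) \<Rightarrow> 'a tens \<Rightarrow> 'a tens \<Rightarrow> 'a tens" where
  "brq q f g w = (\<Sum>k\<le>length w. q (take k w) (drop k w) *
       (f (take k w) * g (drop k w) - g (take k w) * f (drop k w)))"

lemma bracketL_brq: "bracketL p = brq (\<lambda>a b. pw p b a)"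
  by (intro ext) (simp add: bracketL_def brq_def)

lemma bracketR_brq: "bracketR p = brq (\<lambda>a b. pw p a b)"
  by (intro ext) (simp add: bracketR_def brq_def)

lemma pw_nz: "\<forall>i<n. \<forall>j<n. p i j \<noteq> 0 \<Longrightarrow> set a \<subseteq> {..<n} \<Longrightarrow> set b \<subseteq> {..<n}
  \<Longrightarrow> pw p a b \<noteq> (0::'a::field)"
  unfolding pw_def by (auto simp: prod_list_zero_iff subset_iff)

definition lead :: "nat \<Rightarrow> 'a::field tens \<Rightarrow> nat list \<Rightarrow> bool" where
  "lead n f u \<longleftrightarrow> set u \<subseteq> {..<n} \<and> f u \<noteq> 0 \<and>
     (\<forall>w. f w \<noteq> 0 \<longrightarrow> w = u \<or> (mset w = mset u \<and> u < w))"

lemma lead_len: "lead n f u \<Longrightarrow> f w \<noteq> 0 \<Longrightarrow> length w = length u"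
  unfolding lead_def by (metis size_mset)

lemma lead_ge: "lead n f u \<Longrightarrow> f w \<noteq> 0 \<Longrightarrow> mset w = mset u \<and> u \<le> w"
  unfolding lead_def by (metis order.order_iff_strict)

lemma lead_br:
  assumes qnz: "\<And>a b. set a \<subseteq> {..<n} \<Longrightarrow> set b \<subseteq> {..<n} \<Longrightarrow> q a b \<noteq> 0"
    and f: "lead n f u1" and g: "lead n g u2" and lt: "u1 @ u2 < u2 @ u1"
  shows "lead n (brq q f g) (u1 @ u2)"
proof -
  have X: "mset (a @ b) = mset (u1 @ u2) \<and> u1 @ u2 \<le> a @ b" if "f a \<noteq> 0" "g b \<noteq> 0" for a b
  proof -
    have a: "mset a = mset u1 \<and> u1 \<le> a" using lead_ge[OF f that(1)] .
    have b: "mset b = mset u2 \<and> u2 \<le> b" using lead_ge[OF g that(2)] .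
    have la: "length a = length u1" using lead_len[OF f that(1)] .
    have "u1 @ u2 \<le> a @ b"
    proof (cases "u1 = a")
      case True then show ?thesis using b W3 by (metis order.order_iff_strict)
    next
      case False then have "u1 < a" using a by (simp add: order.not_eq_order_implies_strict)
      then show ?thesis using W4 la by (metis less_imp_le)
    qed
    then show ?thesis using a b by simp
  qed
  have Y: "mset (a @ b) = mset (u1 @ u2) \<and> u1 @ u2 < a @ b" if "g a \<noteq> 0" "f b \<noteq> 0" for a b
  proof -
    have a: "mset a = mset u2 \<and> u2 \<le> a" using lead_ge[OF g that(1)] .
    have b: "mset b = mset u1 \<and> u1 \<le> b" using lead_ge[OF f that(2)] .
    have la: "length a = length u2" using lead_len[OF g that(1)] .
    have "u2 @ u1 \<le> a @ b"
    proof (cases "u2 = a")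
      case True then show ?thesis using b W3 by (metis order.order_iff_strict)
    next
      case False then have "u2 < a" using a by (simp add: order.not_eq_order_implies_strict)
      then show ?thesis using W4 la by (metis less_imp_le)
    qed
    then show ?thesis using a b lt by (simp add: add.commute)
  qed
  define w0 where "w0 = u1 @ u2"
  have Z: "g (take k w0) * f (drop k w0) = 0" for k
  proof (rule ccontr)
    assume "g (take k w0) * f (drop k w0) \<noteq> 0"
    then have "u1 @ u2 < take k w0 @ drop k w0" using Y[of "take k w0" "drop k w0"] by simp
    then show False by (simp only: append_take_drop_id w0_def less_irrefl)
  qed
  have Z2: "f (take k w0) = 0" if "k \<le> length w0" "k \<noteq> length u1" for k
  proof (rule ccontr)
    assume "f (take k w0) \<noteq> 0"
    then have "length (take k w0) = length u1" using lead_len[OF f] by blast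
    then show False using that by simp
  qed
  have sets: "set u1 \<subseteq> {..<n}" "set u2 \<subseteq> {..<n}" using f g unfolding lead_def by auto
  have "brq q f g w0 = (\<Sum>k\<le>length w0. (if k = length u1 then q u1 u2 * (f u1 * g u2) else 0))"
    unfolding brq_def
  proof (rule sum.cong)
    fix k assume k: "k \<in> {..length w0}"
    show "q (take k w0) (drop k w0) * (f (take k w0) * g (drop k w0) - g (take k w0) * f (drop k w0))
      = (if k = length u1 then q u1 u2 * (f u1 * g u2) else 0)"
      using Z[of k] Z2[of k] k by (auto simp: w0_def)
  qed simp
  also have "\<dots> = q u1 u2 * (f u1 * g u2)" by (simp add: w0_def)
  finally have v0: "brq q f g w0 = q u1 u2 * (f u1 * g u2)" .
  have "brq q f g w0 \<noteq> 0" unfolding v0 using qnz[OF sets] f g unfolding lead_def by simp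
  moreover have "w = w0 \<or> (mset w = mset w0 \<and> w0 < w)" if "brq q f g w \<noteq> 0" for w
  proof -
    have "\<exists>k. q (take k w) (drop k w) * (f (take k w) * g (drop k w) - g (take k w) * f (drop k w)) \<noteq> 0"
    proof (rule ccontr)
      assume "\<not> ?thesis"
      then have "brq q f g w = 0" unfolding brq_def by (intro sum.neutral) blast
      then show False using that by simp
    qed
    then obtain k where "q (take k w) (drop k w) * (f (take k w) * g (drop k w) - g (take k w) * f (drop k w)) \<noteq> 0"
      by blast
    then have disj: "f (take k w) * g (drop k w) \<noteq> 0 \<or> g (take k w) * f (drop k w) \<noteq> 0" by auto
    have tw: "take k w @ drop k w = w" by simp
    from disj have "mset w = mset w0 \<and> w0 \<le> w"
    proof
      assume "f (take k w) * g (drop k w) \<noteq> 0"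
      then have "mset (take k w @ drop k w) = mset (u1 @ u2) \<and> u1 @ u2 \<le> take k w @ drop k w"
        using X[of "take k w" "drop k w"] by simp
      then show ?thesis unfolding tw w0_def .
    next
      assume "g (take k w) * f (drop k w) \<noteq> 0"
      then have "mset (take k w @ drop k w) = mset (u1 @ u2) \<and> u1 @ u2 < take k w @ drop k w"
        using Y[of "take k w" "drop k w"] by simp
      then show ?thesis unfolding tw w0_def by (simp add: less_imp_le)
    qed
    then show ?thesis by (auto simp: order.order_iff_strict)
  qed
  moreover have "set w0 \<subseteq> {..<n}" using sets w0_def by simp
  ultimately show ?thesis unfolding lead_def w0_def by blast
qed

lemma lyndon_lead:
  assumes qnz: "\<And>a b. set a \<subseteq> {..<n} \<Longrightarrow> set b \<subseteq> {..<n} \<Longrightarrow> q a b \<noteq> 0"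
  shows "lyndon u \<Longrightarrow> set u \<subseteq> {..<n} \<Longrightarrow> \<exists>f \<in> lie_closure (brq q) n. lead n f u"
proof (induction "length u" arbitrary: u rule: less_induct)
  case less
  show ?case
  proof (cases "length u \<ge> 2")
    case True
    obtain w v where wv: "u = w @ v" "lyndon w" "lyndon v" using C[OF less.prems(1) True] by blast
    have ne: "w \<noteq> []" "v \<noteq> []" using wv lyndon_def by auto
    have lt: "w @ v < v @ w" using less.prems(1) wv ne True unfolding lyndon_def wl_iff by auto
    obtain f where f: "f \<in> lie_closure (brq q) n" "lead n f w"
      using less.hyps[of w] wv ne less.prems(2) by auto
    obtain g where g: "g \<in> lie_closure (brq q) n" "lead n g v"
      using less.hyps[of v] wv ne less.prems(2) by auto
    have "brq q f g \<in> lie_closure (brq q) n" using f g lie_closure.br by blast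
    moreover have "lead n (brq q f g) u" using lead_br[OF qnz f(2) g(2) lt] wv by simp
    ultimately show ?thesis by blast
  next
    case False
    then obtain i where u: "u = [i]" using less.prems(1) unfolding lyndon_def
      by (metis One_nat_def length_0_conv length_Suc_conv less_2_cases not_le)
    then have "i < n" using less.prems(2) by simp
    then have "word [i] \<in> lie_closure (brq q) n" by (rule lie_closure.gen)
    moreover have "lead n (word [i]) u" using less.prems(2) u unfolding lead_def word_def by auto
    ultimately show ?thesis by blast
  qed
qed



lemma symm_mset: "s permutes {0..<length w'} \<Longrightarrow> mset (map (\<lambda>a. w' ! s a) [0..<length w']) = mset w'"
  using mset_permute_list[of s w'] by (simp add: permute_list_def atLeast0LessThan)

lemma symm_mset2: "s permutes {0..<length w'} \<Longrightarrow> image_mset (\<lambda>a. w' ! s a) (mset_set {0..<length w'}) = mset w'"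
  using symm_mset[of s w'] by simp

lemma proj_ideal:
  assumes h: "h \<in> nichols_ideal n p"
  shows "(\<lambda>w. if mset w = M then h w else 0) \<in> nichols_ideal n p"
proof -
  have te: "tensor_elem n h" and l1: "\<forall>w. length w \<le> 1 \<longrightarrow> h w = 0" and sy: "\<forall>w. symm p h w = 0"
    using h unfolding nichols_ideal_def by auto
  have "tensor_elem n (\<lambda>w. if mset w = M then h w else 0)"
    using te unfolding tensor_elem_def
    by (auto intro: finite_subset[of _ "{w. h w \<noteq> 0}"])
  moreover have "symm p (\<lambda>w. if mset w = M then h w else 0) w' = 0" for w'
  proof -
    have "symm p (\<lambda>w. if mset w = M then h w else 0) w' = (if mset w' = M then symm p h w' else 0)"
      unfolding symm_def by (auto intro!: sum.cong simp: symm_mset2)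
    then show ?thesis using sy by simp
  qed
  ultimately show ?thesis using l1 unfolding nichols_ideal_def by auto
qed

lemma scale_ideal:
  assumes h: "h \<in> nichols_ideal n p"
  shows "(\<lambda>w. c * h w) \<in> nichols_ideal n p"
proof -
  have te: "tensor_elem n h" and l1: "\<forall>w. length w \<le> 1 \<longrightarrow> h w = 0" and sy: "\<forall>w. symm p h w = 0"
    using h unfolding nichols_ideal_def by auto
  have "tensor_elem n (\<lambda>w. c * h w)"
    using te unfolding tensor_elem_def
    by (auto intro: finite_subset[of _ "{w. h w \<noteq> 0}"])
  moreover have "symm p (\<lambda>w. c * h w) w' = 0" for w'
  proof -
    have "symm p (\<lambda>w. c * h w) w' = c * symm p h w'"
      unfolding symm_def by (simp add: sum_distrib_left mult.assoc)
    then show ?thesis using sy by simp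
  qed
  ultimately show ?thesis using l1 unfolding nichols_ideal_def by auto
qed

lemma main_q:
  fixes p :: "nat \<Rightarrow> nat \<Rightarrow> 'a::field"
  assumes qnz: "\<And>a b. set a \<subseteq> {..<n} \<Longrightarrow> set b \<subseteq> {..<n} \<Longrightarrow> q a b \<noteq> (0::'a)"
    and inf: "infinite (Delta n p)"
  shows "\<not> fin_dim_mod n p (lie_closure (brq q) n)"
proof
  assume "fin_dim_mod n p (lie_closure (brq q) n)"
  then obtain gs :: "'a tens list" where gte: "\<forall>g\<in>set gs. tensor_elem n g"
    and sp: "\<forall>f\<in>lie_closure (brq q) n. \<exists>c :: nat \<Rightarrow> 'a.
          (\<lambda>w. f w - (\<Sum>j<length gs. c j * (gs ! j) w)) \<in> nichols_ideal n p"
    unfolding fin_dim_mod_def by blast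
  have infp: "infinite (Delta_plus n p)" using inf unfolding Delta_def by auto
  define W where "W = (\<Union>g\<in>set gs. {w. g w \<noteq> 0})"
  have fW: "finite W" unfolding W_def using gte tensor_elem_def by auto
  have "infinite (Delta_plus n p - deg ` W)" using infp fW by (simp add: Diff_infinite_finite)
  then obtain d where d: "d \<in> Delta_plus n p" "d \<notin> deg ` W"
    by (metis Diff_iff finite.emptyI ex_in_conv)
  then obtain u where u: "d = deg u" "set u \<subseteq> {..<n}" "lyndon u" "standard n p u"
    unfolding Delta_plus_def by auto
  obtain f where f: "f \<in> lie_closure (brq q) n" "lead n f u" using lyndon_lead[where q=q and n=n and u=u] qnz u(3) u(2) by blast
  obtain c :: "nat \<Rightarrow> 'a" where hI: "(\<lambda>w. f w - (\<Sum>j<length gs. c j * (gs ! j) w)) \<in> nichols_ideal n p"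
    using sp f(1) by blast
  have gz: "(gs ! j) w = 0" if "j < length gs" "mset w = mset u" for j w
  proof (rule ccontr)
    assume "(gs ! j) w \<noteq> 0"
    then have "w \<in> W" unfolding W_def using that(1) nth_mem by blast
    moreover have "deg w = deg u" unfolding deg_def using that(2) by simp
    ultimately show False using d u by (metis image_eqI)
  qed
  have "(\<lambda>w. if mset w = mset u then f w - (\<Sum>j<length gs. c j * (gs ! j) w) else 0) = f"
  proof
    fix w
    show "(if mset w = mset u then f w - (\<Sum>j<length gs. c j * (gs ! j) w) else 0) = f w"
    proof (cases "mset w = mset u")
      case True then show ?thesis using gz by simp
    next
      case False then show ?thesis using f(2) unfolding lead_def by auto
    qed
  qed
  then have fI: "f \<in> nichols_ideal n p" using proj_ideal[OF hI, of "mset u"] by simp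
  have fu: "f u \<noteq> 0" using f(2) unfolding lead_def by simp
  define cc where "cc w = - f w / f u" for w
  have "(\<lambda>w. word u w - (if mset w = mset u \<and> word_less u w then cc w else 0)) = (\<lambda>w. (1 / f u) * f w)"
  proof
    fix w
    show "word u w - (if mset w = mset u \<and> word_less u w then cc w else 0) = (1 / f u) * f w"
    proof (cases "w = u")
      case True then show ?thesis using fu by (simp add: word_def wl_iff)
    next
      case False
      then show ?thesis using f(2) unfolding lead_def word_def cc_def wl_iff by auto
    qed
  qed
  then have "(\<lambda>w. word u w - (if mset w = mset u \<and> word_less u w then cc w else 0)) \<in> nichols_ideal n p"
    using scale_ideal[OF fI, of "1 / f u"] by (simp only:)
  then show False using u(4) unfolding standard_def by blast
qed

theorem theorem6p4:
  fixes n :: nat and p :: "nat \<Rightarrow> nat \<Rightarrow> 'a::field_char_0"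
  assumes "\<forall>i<n. \<forall>j<n. p i j \<noteq> 0"
    and "infinite (Delta n p)"
  shows "\<not> fin_dim_mod n p (LieL n p) \<and> \<not> fin_dim_mod n p (LieR n p)"
proof
  show "\<not> fin_dim_mod n p (LieL n p)"
    unfolding LieL_def bracketL_brq
    by (rule main_q[OF _ assms(2)]) (rule pw_nz[OF assms(1)])
  show "\<not> fin_dim_mod n p (LieR n p)"
    unfolding LieR_def bracketR_brq
    by (rule main_q[OF _ assms(2)]) (rule pw_nz[OF assms(1)])
qed

end
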